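(* Let $\beta,\psi_0$ be real constants, $\kappa>0$, $K\neq0$, and $I=\{r>0: r>K\}$. Set $\tilde{\mathcal{C}}\equiv0$, $\mathcal{V}\equiv0$, $\mathcal{A}(\psi)=-\frac{\beta}{8}\psi^2$, and $$A(r)=1-\frac{K}{r},\qquad C(r)=1,\qquad \psi(r)=-\frac{2\psi_0\sqrt r}{K\sqrt{r-K}} .$$ Then $E^{(1)}_{tt}=E^{(1)}_{rr}=E^{(1)}_{\vartheta\vartheta}=E^{(1)}_{\psi}=0$ hold on $I$. Thus the (asymptotically flat, extremal-Reissner–Nordström-type) metric ${\rm d}s^2=(1-\frac Kr)^2{\rm d}t^2-(1-\frac Kr)^{-2}{\rm d}r^2-r^2{\rm d}\Omega^2$ carries this non-trivial scalar field as a solution of the real-tetrad vacuum field equations.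
   Context: Metric ansatz ${\rm d}s^2=A(r)^2{\rm d}t^2-\frac{C(r)^2}{A(r)^2}{\rm d}r^2-r^2{\rm d}\Omega^2$, $\psi=\psi(r)$. Primes on $A,C,\psi$ are $r$-derivatives; $\mathcal{A}',\tilde{\mathcal{C}}',\tilde{\mathcal{C}}'',\mathcal{V}'$ are $\psi$-derivatives evaluated at $\psi(r)$. The real-tetrad reduced vacuum field equations of the scalar-torsion theory are: $E^{(1)}_{tt}:\ 0=\mathcal{A}\frac{A^2(-2rACA'-A^2(C-2rC')+C^3)}{r^2C^3}+\tilde{\mathcal{C}}'\Big(\frac{A^4\psi''}{C^2}-\frac{A^3\psi'(-rCA'+rAC'-2C^2)}{rC^3}\Big)-\frac{2A^3(A-C)\psi'\mathcal{A}'}{rC^2}+\frac{A^4\psi'^2\tilde{\mathcal{C}}''}{C^2}-\frac{\beta A^4\psi'^2}{2C^2}+\kappa^2A^2\mathcal{V}$; $E^{(1)}_{rr}:\ 0=-\frac{(2rAA'+A^2-C^2)\mathcal{A}}{r^2A^2}+\big(\frac{A'}{A}+\frac2r\big)\psi'\tilde{\mathcal{C}}'+\frac{\kappa^2C^2\mathcal{V}}{A^2}+\frac12\beta\psi'^2$; $E^{(1)}_{\vartheta\vartheta}:\ 0=-\frac{A\psi'(rA'+A-C)\mathcal{A}'}{rC^2}+\tilde{\mathcal{C}}'\Big(\frac{A\psi'(rCA'-rAC'+C^2)}{rC^3}+\frac{A^2\psi''}{C^2}\Big)+\frac{\mathcal{A}(-rCA'^2+A(rA'C'-C(rA''+2A'))+A^2C')}{rC^3}+\frac{A^2\psi'^2\tilde{\mathcal{C}}''}{C^2}-\frac{\beta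 A^2\psi'^2}{2C^2}+\kappa^2\mathcal{V}$; $E^{(1)}_{\psi}:\ 0=\frac{(A-C)(2rA'+A-C)\mathcal{A}'}{r^2C^2}+\frac{\beta A\psi'(2rCA'+A(2C-rC'))}{rC^3}+\frac{\beta A^2\psi''}{C^2}+\kappa^2\mathcal{V}'+\frac{\tilde{\mathcal{C}}'(rCA'(rA'-2C)+A(-r^2A'C'+rC(rA''+6A')-2C^2)+2A^2(C-rC'))}{r^2C^3}$. *)

theory Defs
  imports "HOL-Analysis.Analysis"
begin

text \<open>Arguments:
  A, C, psi : functions of r (primes = r-derivatives, via deriv);
  calA, tC, V : functions of psi (the coupling functions \<A>, \<C>~, \<V>;
  their primes are psi-derivatives evaluated at psi r).
  Each E_xx returns the right-hand side of  0 = ... at radius r.\<close>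

definition E_tt :: "(real\<Rightarrow>real) \<Rightarrow> (real\<Rightarrow>real) \<Rightarrow> (real\<Rightarrow>real) \<Rightarrow>
    (real\<Rightarrow>real) \<Rightarrow> (real\<Rightarrow>real) \<Rightarrow> (real\<Rightarrow>real) \<Rightarrow> real \<Rightarrow> real \<Rightarrow> real \<Rightarrow> real" where
  "E_tt A C psi calA tC V beta kap r =
    (let a = A r; a1 = deriv A r; c = C r; c1 = deriv C r;
         p = psi r; p1 = deriv psi r; p2 = deriv (deriv psi) r;
         cA = calA p; cA1 = deriv calA p; tC1 = deriv tC p; tC2 = deriv (deriv tC) p; pV = V p
     in cA * (a^2 * (- 2*r*a*c*a1 - a^2*(c - 2*r*c1) + c^3)) / (r^2 * c^3)
        + tC1 * (a^4*p2 / c^2 - a^3*p1*(- r*c*a1 + r*a*c1 - 2*c^2) / (r*c^3))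
        - 2*a^3*(a - c)*p1*cA1 / (r*c^2)
        + a^4*p1^2*tC2 / c^2
        - beta*a^4*p1^2 / (2*c^2)
        + kap^2*a^2 * pV)"

definition E_rr :: "(real\<Rightarrow>real) \<Rightarrow> (real\<Rightarrow>real) \<Rightarrow> (real\<Rightarrow>real) \<Rightarrow>
    (real\<Rightarrow>real) \<Rightarrow> (real\<Rightarrow>real) \<Rightarrow> (real\<Rightarrow>real) \<Rightarrow> real \<Rightarrow> real \<Rightarrow> real \<Rightarrow> real" where
  "E_rr A C psi calA tC V beta kap r =
    (let a = A r; a1 = deriv A r; c = C r;
         p = psi r; p1 = deriv psi r;
         cA = calA p; tC1 = deriv tC p; pV = V p
     in - ((2*r*a*a1 + a^2 - c^2) * cA) / (r^2 * a^2)
        + (a1/a + 2/r) * p1 * tC1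
        + kap^2*c^2 * pV / a^2
        + beta*p1^2 / 2)"

definition E_thth :: "(real\<Rightarrow>real) \<Rightarrow> (real\<Rightarrow>real) \<Rightarrow> (real\<Rightarrow>real) \<Rightarrow>
    (real\<Rightarrow>real) \<Rightarrow> (real\<Rightarrow>real) \<Rightarrow> (real\<Rightarrow>real) \<Rightarrow> real \<Rightarrow> real \<Rightarrow> real \<Rightarrow> real" where
  "E_thth A C psi calA tC V beta kap r =
    (let a = A r; a1 = deriv A r; a2 = deriv (deriv A) r; c = C r; c1 = deriv C r;
         p = psi r; p1 = deriv psi r; p2 = deriv (deriv psi) r;
         cA = calA p; cA1 = deriv calA p; tC1 = deriv tC p; tC2 = deriv (deriv tC) p; pV = V p
     in - (a*p1*(r*a1 + a - c)*cA1) / (r*c^2)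
        + tC1 * (a*p1*(r*c*a1 - r*a*c1 + c^2) / (r*c^3) + a^2*p2 / c^2)
        + cA * (- r*c*a1^2 + a*(r*a1*c1 - c*(r*a2 + 2*a1)) + a^2*c1) / (r*c^3)
        + a^2*p1^2*tC2 / c^2
        - beta*a^2*p1^2 / (2*c^2)
        + kap^2 * pV)"

definition E_psi :: "(real\<Rightarrow>real) \<Rightarrow> (real\<Rightarrow>real) \<Rightarrow> (real\<Rightarrow>real) \<Rightarrow>
    (real\<Rightarrow>real) \<Rightarrow> (real\<Rightarrow>real) \<Rightarrow> (real\<Rightarrow>real) \<Rightarrow> real \<Rightarrow> real \<Rightarrow> real \<Rightarrow> real" where
  "E_psi A C psi calA tC V beta kap r =
    (let a = A r; a1 = deriv A r; a2 = deriv (deriv A) r; c = C r; c1 = deriv C r;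
         p = psi r; p1 = deriv psi r; p2 = deriv (deriv psi) r;
         cA1 = deriv calA p; tC1 = deriv tC p; dV = deriv V p
     in (a - c)*(2*r*a1 + a - c)*cA1 / (r^2*c^2)
        + beta*a*p1*(2*r*c*a1 + a*(2*c - r*c1)) / (r*c^3)
        + beta*a^2*p2 / c^2
        + kap^2 * dV
        + tC1 * (r*c*a1*(r*a1 - 2*c) + a*(- (r^2*a1*c1) + r*c*(r*a2 + 6*a1) - 2*c^2)
                 + 2*a^2*(c - r*c1)) / (r^2*c^3))"

end

theory Submission
  imports Defs
begin

lemma deriv_open_eq:
  assumes "open S" "x \<in> S" "\<And>y. y \<in> S \<Longrightarrow> f y = g y"
  shows "deriv f x = deriv g x"
  apply (rule deriv_cong_ev)
   apply (rule eventually_nhds_in_open[OF assms(1,2), THEN eventually_mono])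
  using assms(3) by auto

lemma psi_deriv:
  fixes K psi0 x :: real
  assumes "x > 0" "x > K" "K \<noteq> 0"
  shows "((\<lambda>r. - (2 * psi0 * sqrt r) / (K * sqrt (r - K))) has_real_derivative
          psi0 / (sqrt x * (x - K) * sqrt (x - K))) (at x)"
proof -
  have s: "sqrt x > 0" "sqrt (x-K) > 0" using assms by auto
  show ?thesis
    using assms s apply (auto intro!: derivative_eq_intros)
    using s assms apply (simp add: field_simps)
    done
qed

lemma alg2:
  fixes s w x K psi0 :: real
  assumes "s > 0" "w > 0" "x = s * s" "K = s * s - w * w"
  shows "psi0 *
        ((inverse s * (x - K) / 2 + s) * w +
         inverse w * (s * (x - K)) / 2) /
        (s * (x - K) * w *
         (s * (x - K) * w)) =
        psi0 * (4 * x - K) / (2 * s * x * (x - K)\<^sup>2 * w)"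
  unfolding assms(3,4) using assms(1,2) by (simp add: field_simps power2_eq_square)

lemma psi_deriv2:
  fixes K psi0 x :: real
  assumes "x > 0" "x > K"
  shows "((\<lambda>r. psi0 / (sqrt r * (r - K) * sqrt (r - K))) has_real_derivative
          - psi0 * (4*x - K) / (2 * sqrt x * x * (x-K)^2 * sqrt (x - K))) (at x)"
proof -
  have s: "sqrt x > 0" "sqrt (x-K) > 0" using assms by auto
  show ?thesis
    using assms s apply (auto intro!: derivative_eq_intros)
    apply (rule alg2)
    using assms s by auto
qed

theorem mainTheorem4:
  fixes beta psi0 kap K :: real
  assumes "kap > 0" and "K \<noteq> 0"
  defines "A \<equiv> (\<lambda>r::real. 1 - K / r)"
      and "C \<equiv> (\<lambda>r::real. 1::real)"
      and "psi \<equiv> (\<lambda>r::real. - (2 * psi0 * sqrt r) / (K * sqrt (r - K)))"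
      and "calA \<equiv> (\<lambda>p::real. - (beta / 8) * p^2)"
      and "tC \<equiv> (\<lambda>p::real. 0::real)"
      and "V \<equiv> (\<lambda>p::real. 0::real)"
  shows "\<forall>r \<in> {r::real. r > 0 \<and> r > K}.
           E_tt A C psi calA tC V beta kap r = 0 \<and>
           E_rr A C psi calA tC V beta kap r = 0 \<and>
           E_thth A C psi calA tC V beta kap r = 0 \<and>
           E_psi A C psi calA tC V beta kap r = 0"
proof
  fix r assume "r \<in> {r::real. r > 0 \<and> r > K}"
  hence r0: "r > 0" and rK: "r > K" by auto
  define S where "S = {x::real. x > 0 \<and> x > K}"
  have oS: "open S" unfolding S_def
    by (simp add: Collect_conj_eq open_Int open_greaterThan[unfolded greaterThan_def])
  have rS: "r \<in> S" using r0 rK by (simp add: S_def)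
  have dA: "deriv A x = K / x^2" if "x > 0" for x
    unfolding A_def using that
    by (intro DERIV_imp_deriv) (auto intro!: derivative_eq_intros simp: power2_eq_square)
  have dA2: "deriv (deriv A) r = - 2 * K / r^3"
  proof -
    have "deriv (deriv A) r = deriv (\<lambda>x. K / x^2) r"
      by (rule deriv_open_eq[OF oS rS]) (simp add: S_def dA)
    also have "\<dots> = - 2 * K / r^3" using r0
      by (intro DERIV_imp_deriv) (auto intro!: derivative_eq_intros simp: field_simps power2_eq_square power3_eq_cube)
    finally show ?thesis .
  qed
  have dC: "deriv C x = 0" for x unfolding C_def by simp
  have dtC: "deriv tC x = 0" for x unfolding tC_def by simp
  have dtC2: "deriv (deriv tC) x = 0" for x unfolding dtC by simp
  have dV: "deriv V x = 0" for x unfolding V_def by simp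
  have dcalA: "deriv calA x = - (beta/4) * x" for x unfolding calA_def
    by (intro DERIV_imp_deriv) (auto intro!: derivative_eq_intros)
  have dpsi: "deriv psi x = psi0 / (sqrt x * (x - K) * sqrt (x - K))" if "x \<in> S" for x
    unfolding psi_def using that assms(2) by (intro DERIV_imp_deriv psi_deriv) (auto simp: S_def)
  have dpsi2: "deriv (deriv psi) r = - psi0 * (4*r - K) / (2 * sqrt r * r * (r-K)^2 * sqrt (r - K))"
  proof -
    have "deriv (deriv psi) r = deriv (\<lambda>x. psi0 / (sqrt x * (x - K) * sqrt (x - K))) r"
      by (rule deriv_open_eq[OF oS rS]) (simp add: dpsi)
    also have "\<dots> = - psi0 * (4*r - K) / (2 * sqrt r * r * (r-K)^2 * sqrt (r - K))"
      using r0 rK by (intro DERIV_imp_deriv psi_deriv2)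
    finally show ?thesis .
  qed
  note subs = dA[OF r0] dA2 dC dtC dtC2 dV dcalA dpsi[OF rS] dpsi2
  show "E_tt A C psi calA tC V beta kap r = 0 \<and>
           E_rr A C psi calA tC V beta kap r = 0 \<and>
           E_thth A C psi calA tC V beta kap r = 0 \<and>
           E_psi A C psi calA tC V beta kap r = 0"
  proof -
    obtain s w where sw: "sqrt r = s" "sqrt (r-K) = w" by blast
    have s0: "s > 0" and w0: "w > 0" using sw r0 rK by auto
    have "sqrt r * sqrt r = r" using r0 by simp
    hence hr: "r = s * s" using sw by simp
    have "sqrt (r-K) * sqrt (r-K) = r - K" using rK by simp
    hence hrK: "r - K = w * w" using sw by simp
    have hK: "K = s * s - w * w" using hr hrK by simp
    have hA: "1 - K / (s * s) = w * w / (s * s)" using hK s0 by (simp add: field_simps)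
    show ?thesis
      unfolding E_tt_def E_rr_def E_thth_def E_psi_def Let_def subs
      unfolding A_def C_def psi_def calA_def tC_def V_def
      unfolding sw
      unfolding hrK
      unfolding hr hA
      using s0 w0 assms(2)
      apply (intro conjI)
      subgoal apply (simp add: field_simps power2_eq_square power3_eq_cube) apply (unfold hK) by algebra
      subgoal apply (simp add: field_simps power2_eq_square power3_eq_cube) apply (unfold hK) by algebra
      subgoal apply (simp add: field_simps power2_eq_square power3_eq_cube) apply (unfold hK) by algebra
      subgoal apply (simp add: field_simps power2_eq_square power3_eq_cube) apply (unfold hK) by algebra
      done
  qed
qed

end
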